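(* There exist infinitely many EPS-graphs.
   Context: All graphs are finite and simple. $\mathcal{C}$ is the family of complete graphs; $\iota(J)$ is the family of graphs isomorphic to induced subgraphs of $J$; $\mathcal{F}_1\vee\mathcal{F}_2$ (resp. $\mathcal{F}_1\wedge\mathcal{F}_2$) is the family of disjoint unions (resp. joins) of a graph in $\mathcal{F}_1$ and a graph in $\mathcal{F}_2$; $S_2$ is the edgeless graph on $2$ vertices, $K_2$ an edge. $\mathcal{C}^+$ is the family of graphs $G$ that are complete or such that $G\setminus v$ is complete for some $v\in V(G)$ with $\deg(v)\le1$. For a positive integer $l$, a graph $H$ is an $l$-EPS-graph if: (EPS1) for every $1\le s\le l$, $V(H)$ can be partitioned into $s$ stable sets and $l-s$ cliques; (EPS2) for each $\mathcal{G}\in\{\iota(S_2)\vee\mathcal{C},\iota(K_2)\vee\mathcal{C},\iota(S_2)\wedge\mathcal{C},\mathcal{C}^+\}$, $V(H)$ can be partitioned into $l-1$ cliques and a set inducing a graph in $\mathcal{G}$; (EPS3) there is no partition $(X_1,\dots,X_l)$ of $V(H)$ such that $H[X_1]$ is a clique or the complement of a star $K_{1,m}$, and $X_i$ is a clique for $2\le i\le l$. An EPS-graph is an $l$-EPS-graph for some positive integer $l$. *)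

theory Defs
  imports Main
begin

type_synonym 'a graph = "'a set \<times> ('a \<Rightarrow> 'a \<Rightarrow> bool)"

definition verts :: "'a graph \<Rightarrow> 'a set" where "verts G = fst G"
definition adj :: "'a graph \<Rightarrow> 'a \<Rightarrow> 'a \<Rightarrow> bool" where "adj G = snd G"

definition wf_graph :: "'a graph \<Rightarrow> bool" where
  "wf_graph G \<longleftrightarrow> finite (verts G) \<and>
     (\<forall>x y. adj G x y \<longrightarrow> x \<in> verts G \<and> y \<in> verts G \<and> x \<noteq> y \<and> adj G y x)"

definition induced :: "'a graph \<Rightarrow> 'a set \<Rightarrow> 'a graph" where
  "induced G X = (X \<inter> verts G, \<lambda>x y. x \<in> X \<and> y \<in> X \<and> adj G x y)"

definition graph_iso :: "'a graph \<Rightarrow> 'b graph \<Rightarrow> bool" where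
  "graph_iso G H \<longleftrightarrow> (\<exists>f. bij_betw f (verts G) (verts H) \<and>
     (\<forall>x\<in>verts G. \<forall>y\<in>verts G. adj G x y \<longleftrightarrow> adj H (f x) (f y)))"

definition complete_fam :: "'a graph \<Rightarrow> bool" where
  "complete_fam G \<longleftrightarrow> (\<forall>x\<in>verts G. \<forall>y\<in>verts G. x \<noteq> y \<longrightarrow> adj G x y)"

definition iota :: "'b graph \<Rightarrow> 'a graph \<Rightarrow> bool" where
  "iota J G \<longleftrightarrow> (\<exists>Y \<subseteq> verts J. graph_iso G (induced J Y))"

definition disj_union_fam :: "('a graph \<Rightarrow> bool) \<Rightarrow> ('a graph \<Rightarrow> bool) \<Rightarrow> 'a graph \<Rightarrow> bool" where
  "disj_union_fam F1 F2 G \<longleftrightarrow> (\<exists>A B. A \<union> B = verts G \<and> A \<inter> B = {} \<and>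
     (\<forall>a\<in>A. \<forall>b\<in>B. \<not> adj G a b) \<and> F1 (induced G A) \<and> F2 (induced G B))"

definition join_fam :: "('a graph \<Rightarrow> bool) \<Rightarrow> ('a graph \<Rightarrow> bool) \<Rightarrow> 'a graph \<Rightarrow> bool" where
  "join_fam F1 F2 G \<longleftrightarrow> (\<exists>A B. A \<union> B = verts G \<and> A \<inter> B = {} \<and>
     (\<forall>a\<in>A. \<forall>b\<in>B. adj G a b) \<and> F1 (induced G A) \<and> F2 (induced G B))"

definition S2 :: "bool graph" where "S2 = (UNIV, \<lambda>x y. False)"
definition K2 :: "bool graph" where "K2 = (UNIV, \<lambda>x y. x \<noteq> y)"

definition degree_in :: "'a graph \<Rightarrow> 'a \<Rightarrow> nat" where
  "degree_in G v = card {u \<in> verts G. adj G v u}"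

definition Cplus_fam :: "'a graph \<Rightarrow> bool" where
  "Cplus_fam G \<longleftrightarrow> complete_fam G \<or>
     (\<exists>v\<in>verts G. complete_fam (induced G (verts G - {v})) \<and> degree_in G v \<le> 1)"

definition star :: "nat \<Rightarrow> nat graph" where
  "star m = ({0..m}, \<lambda>x y. x \<in> {0..m} \<and> y \<in> {0..m} \<and> x \<noteq> y \<and> (x = 0 \<or> y = 0))"

definition complement :: "'a graph \<Rightarrow> 'a graph" where
  "complement G = (verts G, \<lambda>x y. x \<in> verts G \<and> y \<in> verts G \<and> x \<noteq> y \<and> \<not> adj G x y)"

definition is_clique :: "'a graph \<Rightarrow> 'a set \<Rightarrow> bool" where
  "is_clique G X \<longleftrightarrow> X \<subseteq> verts G \<and> (\<forall>x\<in>X. \<forall>y\<in>X. x \<noteq> y \<longrightarrow> adj G x y)"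

definition is_stable :: "'a graph \<Rightarrow> 'a set \<Rightarrow> bool" where
  "is_stable G X \<longleftrightarrow> X \<subseteq> verts G \<and> (\<forall>x\<in>X. \<forall>y\<in>X. \<not> adj G x y)"

(* P 0, ..., P (l-1) is a partition of V(G) (parts may be empty) *)
definition is_partition :: "'a graph \<Rightarrow> nat \<Rightarrow> (nat \<Rightarrow> 'a set) \<Rightarrow> bool" where
  "is_partition G l P \<longleftrightarrow> (\<Union>i<l. P i) = verts G \<and>
     (\<forall>i<l. \<forall>j<l. i \<noteq> j \<longrightarrow> P i \<inter> P j = {})"

definition cliques_plus :: "'a graph \<Rightarrow> nat \<Rightarrow> ('a graph \<Rightarrow> bool) \<Rightarrow> bool" where
  "cliques_plus H l F \<longleftrightarrow> (\<exists>P. is_partition H l P \<and> F (induced H (P 0)) \<and>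
      (\<forall>i. 1 \<le> i \<and> i < l \<longrightarrow> is_clique H (P i)))"

definition l_EPS :: "nat \<Rightarrow> 'a graph \<Rightarrow> bool" where
  "l_EPS l H \<longleftrightarrow> 0 < l \<and>
    (\<forall>s. 1 \<le> s \<and> s \<le> l \<longrightarrow> (\<exists>P. is_partition H l P \<and>
        (\<forall>i<s. is_stable H (P i)) \<and> (\<forall>i. s \<le> i \<and> i < l \<longrightarrow> is_clique H (P i)))) \<and>
    cliques_plus H l (disj_union_fam (iota S2) complete_fam) \<and>
    cliques_plus H l (disj_union_fam (iota K2) complete_fam) \<and>
    cliques_plus H l (join_fam (iota S2) complete_fam) \<and>
    cliques_plus H l Cplus_fam \<and>
    \<not> (\<exists>P. is_partition H l P \<and>
        (is_clique H (P 0) \<or> (\<exists>m. graph_iso (induced H (P 0)) (complement (star m)))) \<and>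
        (\<forall>i. 1 \<le> i \<and> i < l \<longrightarrow> is_clique H (P i)))"

definition EPS_graph :: "'a graph \<Rightarrow> bool" where
  "EPS_graph H \<longleftrightarrow> (\<exists>l. l_EPS l H)"

end

theory Submission
  imports Defs "HOL-Library.Countable"
begin


datatype vt = T nat | W | X nat | A nat | B nat

instance vt :: countable by countable_datatype

fun inV :: "nat \<Rightarrow> vt \<Rightarrow> bool" where
  "inV l (T i) = (i \<le> l)"
| "inV l W = True"
| "inV l (X i) = (2 \<le> i \<and> i \<le> l)"
| "inV l (A i) = (2 \<le> i \<and> i \<le> l)"
| "inV l (B i) = (2 \<le> i \<and> i \<le> l)"

fun E0 :: "vt \<Rightarrow> vt \<Rightarrow> bool" where
  "E0 (T i) (X j) = (i = j)"
| "E0 (T i) (A j) = (i = j \<or> i = 0)"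
| "E0 (T i) (B j) = (i = j \<or> i = 1)"
| "E0 (T i) W = (i \<le> 1)"
| "E0 (X i) (A j) = (i = j)"
| "E0 (X i) (B j) = (i = j)"
| "E0 (X i) W = (i = 2)"
| "E0 (A i) (A j) = (i \<noteq> j)"
| "E0 (B i) (B j) = (i \<noteq> j)"
| "E0 (A i) (B j) = (i = j)"
| "E0 (A i) W = (i = 2)"
| "E0 (B i) W = (i = 2)"
| "E0 _ _ = False"

definition E :: "vt \<Rightarrow> vt \<Rightarrow> bool" where "E u v \<longleftrightarrow> E0 u v \<or> E0 v u"

definition HH :: "nat \<Rightarrow> nat graph" where
  "HH l = (to_nat ` {u. inV l u}, \<lambda>x y. \<exists>u v. x = to_nat u \<and> y = to_nat v \<and> inV l u \<and> inV l v \<and> E u v)"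

lemma E_irrefl[simp]: "\<not> E u u"
  by (cases u) (auto simp: E_def)

lemma E_sym: "E u v = E v u"
  by (auto simp: E_def)

lemma verts_HH: "verts (HH l) = to_nat ` {u. inV l u}"
  by (simp add: HH_def verts_def)

lemma adj_HH: "adj (HH l) x y \<longleftrightarrow> (\<exists>u v. x = to_nat u \<and> y = to_nat v \<and> inV l u \<and> inV l v \<and> E u v)"
  by (simp add: HH_def adj_def)

lemma adj_HH_to_nat[simp]: "adj (HH l) (to_nat u) (to_nat v) \<longleftrightarrow> inV l u \<and> inV l v \<and> E u v"
  by (auto simp: adj_HH)

lemma to_nat_in_verts[simp]: "to_nat u \<in> verts (HH l) \<longleftrightarrow> inV l u"
  by (auto simp: verts_HH)

lemma finite_inV: "finite {u. inV l u}"
proof -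
  have "{u. inV l u} \<subseteq> T ` {..l} \<union> {W} \<union> X ` {..l} \<union> A ` {..l} \<union> B ` {..l}"
  proof
    fix u assume "u \<in> {u. inV l u}" then show "u \<in> T ` {..l} \<union> {W} \<union> X ` {..l} \<union> A ` {..l} \<union> B ` {..l}"
      by (cases u) auto
  qed
  then show ?thesis by (rule finite_subset) auto
qed

lemma wf_HH: "wf_graph (HH l)"
  unfolding wf_graph_def
  by (auto simp: verts_HH finite_inV adj_HH E_sym)

definition PP :: "nat \<Rightarrow> (vt \<Rightarrow> nat) \<Rightarrow> nat \<Rightarrow> nat set" where
  "PP l p i = to_nat ` {u. inV l u \<and> p u = i}"

lemma part_HH:
  assumes "\<forall>u. inV l u \<longrightarrow> p u < l"
  shows "is_partition (HH l) l (PP l p)"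
  unfolding is_partition_def PP_def verts_HH
proof (intro conjI allI impI)
  show "(\<Union>i<l. to_nat ` {u. inV l u \<and> p u = i}) = to_nat ` {u. inV l u}"
    using assms by auto
next
  fix i j assume "i < l" "j < l" "i \<noteq> j"
  then show "to_nat ` {u. inV l u \<and> p u = i} \<inter> to_nat ` {u. inV l u \<and> p u = j} = {}"
    by auto
qed

lemma clique_HH:
  assumes "\<forall>u v. inV l u \<longrightarrow> inV l v \<longrightarrow> p u = i \<longrightarrow> p v = i \<longrightarrow> u \<noteq> v \<longrightarrow> E u v"
  shows "is_clique (HH l) (PP l p i)"
  using assms unfolding is_clique_def PP_def by auto

lemma stable_HH:
  assumes "\<forall>u v. inV l u \<longrightarrow> inV l v \<longrightarrow> p u = i \<longrightarrow> p v = i \<longrightarrow> \<not> E u v"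
  shows "is_stable (HH l) (PP l p i)"
  using assms unfolding is_stable_def PP_def by auto

fun p1 :: "vt \<Rightarrow> nat" where
  "p1 (T i) = (if i \<le> 2 then 0 else i - 1)"
| "p1 W = 1"
| "p1 (X i) = i - 1"
| "p1 (A i) = i - 1"
| "p1 (B i) = i - 1"

lemma p1_range: "5 \<le> l \<Longrightarrow> \<forall>u. inV l u \<longrightarrow> p1 u < l"
  by (intro allI, case_tac u) auto

lemma p1_clique: "1 \<le> i \<Longrightarrow> \<forall>u v. inV l u \<longrightarrow> inV l v \<longrightarrow> p1 u = i \<longrightarrow> p1 v = i \<longrightarrow> u \<noteq> v \<longrightarrow> E u v"
  apply (intro allI impI)
  subgoal for u v by (cases u; cases v) (auto simp: E_def split: if_splits)
  done

lemma p1_stable: "\<forall>u v. inV l u \<longrightarrow> inV l v \<longrightarrow> p1 u = 0 \<longrightarrow> p1 v = 0 \<longrightarrow> \<not> E u v"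
  apply (intro allI impI)
  subgoal for u v by (cases u; cases v) (auto simp: E_def split: if_splits)
  done

lemma p1_P0: "2 \<le> l \<Longrightarrow> {u. inV l u \<and> p1 u = 0} = {T 0, T 1, T 2}"
  apply (rule set_eqI)
  subgoal for u by (cases u) auto
  done

fun pm :: "nat \<Rightarrow> vt \<Rightarrow> nat" where
  "pm s (T i) = (if i = 0 then s else if i = 1 then Suc s else 0)"
| "pm s W = 0"
| "pm s (X i) = 1"
| "pm s (A i) = s"
| "pm s (B i) = Suc s"

lemma pm_range: "Suc s < l \<Longrightarrow> \<forall>u. inV l u \<longrightarrow> pm s u < l"
  by (intro allI, case_tac u) auto

lemma pm_clique: "2 \<le> s \<Longrightarrow> s \<le> i \<Longrightarrow> \<forall>u v. inV l u \<longrightarrow> inV l v \<longrightarrow> pm s u = i \<longrightarrow> pm s v = i \<longrightarrow> u \<noteq> v \<longrightarrow> E u v"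
  apply (intro allI impI)
  subgoal for u v by (cases u; cases v) (auto simp: E_def split: if_splits)
  done

lemma pm_stable: "2 \<le> s \<Longrightarrow> i < s \<Longrightarrow> \<forall>u v. inV l u \<longrightarrow> inV l v \<longrightarrow> pm s u = i \<longrightarrow> pm s v = i \<longrightarrow> \<not> E u v"
  apply (intro allI impI)
  subgoal for u v by (cases u; cases v) (auto simp: E_def split: if_splits)
  done

fun pL1 :: "nat \<Rightarrow> vt \<Rightarrow> nat" where
  "pL1 l (T i) = 0"
| "pL1 l W = l - 1"
| "pL1 l (X i) = (if i = 2 then l - 1 else if i = l then 2 else if i = l - 1 then 1 else i)"
| "pL1 l (A i) = (if i = 2 then l - 1 else i - 2)"
| "pL1 l (B i) = (if i = 2 then l - 1 else if i = l then 1 else i - 1)"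

lemma pL1_range: "5 \<le> l \<Longrightarrow> \<forall>u. inV l u \<longrightarrow> pL1 l u < l"
  by (intro allI, case_tac u) auto

lemma pL1_clique: "5 \<le> l \<Longrightarrow> \<forall>u v. inV l u \<longrightarrow> inV l v \<longrightarrow> pL1 l u = l - 1 \<longrightarrow> pL1 l v = l - 1 \<longrightarrow> u \<noteq> v \<longrightarrow> E u v"
  apply (intro allI impI)
  subgoal for u v by (cases u; cases v) (auto simp: E_def split: if_splits)
  done



lemma pL1_E: "5 \<le> l \<Longrightarrow> inV l u \<Longrightarrow> inV l v \<Longrightarrow> E u v \<Longrightarrow> pL1 l u = pL1 l v \<Longrightarrow> pL1 l u = l - 1"
  apply (cases u; cases v)
  apply (simp_all add: E_def)
  apply (auto split: if_splits)
  done

lemma pL1_stable: "5 \<le> l \<Longrightarrow> i < l - 1 \<Longrightarrow> \<forall>u v. inV l u \<longrightarrow> inV l v \<longrightarrow> pL1 l u = i \<longrightarrow> pL1 l v = i \<longrightarrow> \<not> E u v"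
  using pL1_E by fastforce

fun pL :: "nat \<Rightarrow> vt \<Rightarrow> nat" where
  "pL l (T i) = 0"
| "pL l W = 4"
| "pL l (X i) = (if i = l then 2 else if i = l - 1 then 1 else i + 1)"
| "pL l (A i) = i - 1"
| "pL l (B i) = (if i = l then 1 else i)"

lemma pL_range: "5 \<le> l \<Longrightarrow> \<forall>u. inV l u \<longrightarrow> pL l u < l"
  by (intro allI, case_tac u) auto

lemma pL_E: "5 \<le> l \<Longrightarrow> inV l u \<Longrightarrow> inV l v \<Longrightarrow> E u v \<Longrightarrow> pL l u = pL l v \<Longrightarrow> False"
  apply (cases u; cases v)
  apply (simp_all add: E_def)
  apply (auto split: if_splits)
  done

lemma pL_stable: "5 \<le> l \<Longrightarrow> \<forall>u v. inV l u \<longrightarrow> inV l v \<longrightarrow> pL l u = i \<longrightarrow> pL l v = i \<longrightarrow> \<not> E u v"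
  using pL_E by fastforce

fun pF2 :: "vt \<Rightarrow> nat" where
  "pF2 (T i) = (if i = 0 then 1 else if i = 1 then 2 else if i \<le> 3 then 0 else i - 1)"
| "pF2 W = 2"
| "pF2 (X i) = (if i \<le> 3 then 0 else i - 1)"
| "pF2 (A i) = (if i = 2 then 1 else if i = 3 then 0 else i - 1)"
| "pF2 (B i) = (if i = 2 then 2 else if i = 3 then 0 else i - 1)"

lemma pF2_range: "5 \<le> l \<Longrightarrow> \<forall>u. inV l u \<longrightarrow> pF2 u < l"
  by (intro allI, case_tac u) auto

lemma pF2_C: "1 \<le> pF2 u \<Longrightarrow> inV l u \<Longrightarrow> inV l v \<Longrightarrow> pF2 u = pF2 v \<Longrightarrow> u \<noteq> v \<Longrightarrow> E u v"
  apply (cases u; cases v)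
  apply (simp_all add: E_def)
  apply (auto split: if_splits)
  done

lemma pF2_clique: "1 \<le> i \<Longrightarrow> \<forall>u v. inV l u \<longrightarrow> inV l v \<longrightarrow> pF2 u = i \<longrightarrow> pF2 v = i \<longrightarrow> u \<noteq> v \<longrightarrow> E u v"
  using pF2_C by fastforce

lemma pF2_P0: "5 \<le> l \<Longrightarrow> {u. inV l u \<and> pF2 u = 0} = {T 2, X 2, T 3, X 3, A 3, B 3}"
  apply (rule set_eqI)
  subgoal for u by (cases u) auto
  done

fun pF3 :: "vt \<Rightarrow> nat" where
  "pF3 (T i) = (if i \<le> 1 then 0 else i - 1)"
| "pF3 W = 0"
| "pF3 (X i) = i - 1"
| "pF3 (A i) = i - 1"
| "pF3 (B i) = i - 1"

lemma pF3_range: "5 \<le> l \<Longrightarrow> \<forall>u. inV l u \<longrightarrow> pF3 u < l"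
  by (intro allI, case_tac u) auto

lemma pF3_C: "1 \<le> pF3 u \<Longrightarrow> inV l u \<Longrightarrow> inV l v \<Longrightarrow> pF3 u = pF3 v \<Longrightarrow> u \<noteq> v \<Longrightarrow> E u v"
  apply (cases u; cases v)
  apply (simp_all add: E_def)
  apply (auto split: if_splits)
  done

lemma pF3_clique: "1 \<le> i \<Longrightarrow> \<forall>u v. inV l u \<longrightarrow> inV l v \<longrightarrow> pF3 u = i \<longrightarrow> pF3 v = i \<longrightarrow> u \<noteq> v \<longrightarrow> E u v"
  using pF3_C by fastforce

lemma pF3_P0: "5 \<le> l \<Longrightarrow> {u. inV l u \<and> pF3 u = 0} = {T 0, T 1, W}"
  apply (rule set_eqI)
  subgoal for u by (cases u) auto
  done



lemma verts_induced[simp]: "verts (induced G Z) = Z \<inter> verts G"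
  by (simp add: induced_def verts_def)

lemma adj_induced[simp]: "adj (induced G Z) x y = (x \<in> Z \<and> y \<in> Z \<and> adj G x y)"
  by (simp add: induced_def adj_def)

lemma iota_S2I:
  assumes "verts G = {a, b}" "a \<noteq> b" "\<forall>x\<in>{a,b}. \<forall>y\<in>{a,b}. \<not> adj G x y"
  shows "iota S2 G"
proof -
  have vS: "verts (induced S2 UNIV) = UNIV" and aS: "\<And>p q. \<not> adj (induced S2 UNIV) p q"
    by (auto simp: S2_def verts_def adj_def induced_def)
  have "bij_betw (\<lambda>x. x = a) (verts G) (verts (induced S2 UNIV))"
    unfolding assms(1) vS bij_betw_def inj_on_def using assms(2) by auto
  moreover have "\<forall>x\<in>verts G. \<forall>y\<in>verts G. adj G x y = adj (induced S2 UNIV) (x = a) (y = a)"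
    using assms aS by auto
  ultimately show ?thesis unfolding iota_def graph_iso_def
    by (intro exI[of _ UNIV]) (auto simp: S2_def verts_def)
qed

lemma iota_K2I:
  assumes "verts G = {a, b}" "a \<noteq> b" "adj G a b" "adj G b a" "\<not> adj G a a" "\<not> adj G b b"
  shows "iota K2 G"
proof -
  have vS: "verts (induced K2 UNIV) = UNIV" and aS: "\<And>p q. adj (induced K2 UNIV) p q = (p \<noteq> q)"
    by (auto simp: K2_def verts_def adj_def induced_def)
  have "bij_betw (\<lambda>x. x = a) (verts G) (verts (induced K2 UNIV))"
    unfolding assms(1) vS bij_betw_def inj_on_def using assms(2) by auto
  moreover have "\<forall>x\<in>verts G. \<forall>y\<in>verts G. adj G x y = adj (induced K2 UNIV) (x = a) (y = a)"
    using assms aS by auto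
  ultimately show ?thesis unfolding iota_def graph_iso_def
    by (intro exI[of _ UNIV]) (auto simp: K2_def verts_def)
qed

lemma complete_fam_induced:
  assumes "\<forall>x\<in>Y. \<forall>y\<in>Y. x \<noteq> y \<longrightarrow> x \<in> verts G \<longrightarrow> y \<in> verts G \<longrightarrow> adj G x y"
  shows "complete_fam (induced G Y)"
  using assms unfolding complete_fam_def by auto

lemma PP_eq: "{u. inV l u \<and> p u = i} = S \<Longrightarrow> PP l p i = to_nat ` S"
  by (simp add: PP_def)

lemma F1_ok: assumes "5 \<le> l"
  shows "cliques_plus (HH l) l (disj_union_fam (iota S2) complete_fam)"
proof -
  have P0: "PP l p1 0 = {to_nat (T 0), to_nat (T 1), to_nat (T 2)}"
    using p1_P0[of l] assms by (simp add: PP_def)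
  let ?G = "induced (HH l) (PP l p1 0)"
  have "disj_union_fam (iota S2) complete_fam ?G"
    unfolding disj_union_fam_def
  proof (rule exI[of _ "{to_nat (T 0), to_nat (T 1)}"], rule exI[of _ "{to_nat (T 2)}"], intro conjI)
    show "{to_nat (T 0), to_nat (T 1)} \<union> {to_nat (T 2)} = verts ?G"
      using assms by (auto simp: P0)
    show "{to_nat (T 0), to_nat (T 1)} \<inter> {to_nat (T 2)} = {}" by auto
    show "\<forall>a\<in>{to_nat (T 0), to_nat (T 1)}. \<forall>b\<in>{to_nat (T 2)}. \<not> adj ?G a b"
      by (auto simp: E_def)
    show "iota S2 (induced ?G {to_nat (T 0), to_nat (T 1)})"
      by (rule iota_S2I[of _ "to_nat (T 0)" "to_nat (T 1)"]) (use assms in \<open>auto simp: P0 E_def\<close>)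
    show "complete_fam (induced ?G {to_nat (T 2)})"
      by (rule complete_fam_induced) auto
  qed
  moreover have "is_partition (HH l) l (PP l p1)"
    using part_HH p1_range assms by blast
  moreover have "\<forall>i. 1 \<le> i \<and> i < l \<longrightarrow> is_clique (HH l) (PP l p1 i)"
    using clique_HH p1_clique by blast
  ultimately show ?thesis unfolding cliques_plus_def by blast
qed

lemma F2_ok: assumes "5 \<le> l"
  shows "cliques_plus (HH l) l (disj_union_fam (iota K2) complete_fam)"
proof -
  have P0: "PP l pF2 0 = to_nat ` {T 2, X 2, T 3, X 3, A 3, B 3}"
    using pF2_P0[of l] assms by (simp add: PP_def)
  let ?G = "induced (HH l) (PP l pF2 0)"
  have "disj_union_fam (iota K2) complete_fam ?G"
    unfolding disj_union_fam_def
  proof (rule exI[of _ "{to_nat (T 2), to_nat (X 2)}"], rule exI[of _ "to_nat ` {T 3, X 3, A 3, B 3}"], intro conjI)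
    show "{to_nat (T 2), to_nat (X 2)} \<union> to_nat ` {T 3, X 3, A 3, B 3} = verts ?G"
      using assms by (auto simp: P0)
    show "{to_nat (T 2), to_nat (X 2)} \<inter> to_nat ` {T 3, X 3, A 3, B 3} = {}" by auto
    show "\<forall>a\<in>{to_nat (T 2), to_nat (X 2)}. \<forall>b\<in>to_nat ` {T 3, X 3, A 3, B 3}. \<not> adj ?G a b"
      by (auto simp: E_def)
    show "iota K2 (induced ?G {to_nat (T 2), to_nat (X 2)})"
      by (rule iota_K2I[of _ "to_nat (T 2)" "to_nat (X 2)"]) (use assms in \<open>auto simp: P0 E_def\<close>)
    show "complete_fam (induced ?G (to_nat ` {T 3, X 3, A 3, B 3}))"
      by (rule complete_fam_induced) (auto simp: E_def)
  qed
  moreover have "is_partition (HH l) l (PP l pF2)"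
    using part_HH pF2_range assms by blast
  moreover have "\<forall>i. 1 \<le> i \<and> i < l \<longrightarrow> is_clique (HH l) (PP l pF2 i)"
    using clique_HH pF2_clique by blast
  ultimately show ?thesis unfolding cliques_plus_def by blast
qed

lemma F3_ok: assumes "5 \<le> l"
  shows "cliques_plus (HH l) l (join_fam (iota S2) complete_fam)"
proof -
  have P0: "PP l pF3 0 = {to_nat (T 0), to_nat (T 1), to_nat W}"
    using pF3_P0[of l] assms by (simp add: PP_def)
  let ?G = "induced (HH l) (PP l pF3 0)"
  have "join_fam (iota S2) complete_fam ?G"
    unfolding join_fam_def
  proof (rule exI[of _ "{to_nat (T 0), to_nat (T 1)}"], rule exI[of _ "{to_nat W}"], intro conjI)
    show "{to_nat (T 0), to_nat (T 1)} \<union> {to_nat W} = verts ?G"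
      using assms by (auto simp: P0)
    show "{to_nat (T 0), to_nat (T 1)} \<inter> {to_nat W} = {}" by auto
    show "\<forall>a\<in>{to_nat (T 0), to_nat (T 1)}. \<forall>b\<in>{to_nat W}. adj ?G a b"
      using assms by (auto simp: E_def P0)
    show "iota S2 (induced ?G {to_nat (T 0), to_nat (T 1)})"
      by (rule iota_S2I[of _ "to_nat (T 0)" "to_nat (T 1)"]) (use assms in \<open>auto simp: P0 E_def\<close>)
    show "complete_fam (induced ?G {to_nat W})"
      by (rule complete_fam_induced) auto
  qed
  moreover have "is_partition (HH l) l (PP l pF3)"
    using part_HH pF3_range assms by blast
  moreover have "\<forall>i. 1 \<le> i \<and> i < l \<longrightarrow> is_clique (HH l) (PP l pF3 i)"
    using clique_HH pF3_clique by blast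
  ultimately show ?thesis unfolding cliques_plus_def by blast
qed

lemma F4_ok: assumes "5 \<le> l"
  shows "cliques_plus (HH l) l Cplus_fam"
proof -
  have P0: "PP l pF3 0 = {to_nat (T 0), to_nat (T 1), to_nat W}"
    using pF3_P0[of l] assms by (simp add: PP_def)
  let ?G = "induced (HH l) (PP l pF3 0)"
  have vG: "verts ?G = {to_nat (T 0), to_nat (T 1), to_nat W}"
    using assms by (auto simp: P0)
  have "{u \<in> verts ?G. adj ?G (to_nat (T 0)) u} = {to_nat W}"
    using assms by (auto simp: vG P0 E_def)
  then have deg: "degree_in ?G (to_nat (T 0)) = 1"
    by (simp add: degree_in_def)
  have "complete_fam (induced ?G (verts ?G - {to_nat (T 0)}))"
    by (rule complete_fam_induced) (auto simp: vG P0 E_def)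
  then have "Cplus_fam ?G"
    unfolding Cplus_fam_def using deg vG by auto
  moreover have "is_partition (HH l) l (PP l pF3)"
    using part_HH pF3_range assms by blast
  moreover have "\<forall>i. 1 \<le> i \<and> i < l \<longrightarrow> is_clique (HH l) (PP l pF3 i)"
    using clique_HH pF3_clique by blast
  ultimately show ?thesis unfolding cliques_plus_def by blast
qed



lemma EPS1_ok: assumes l5: "5 \<le> l" and s1: "1 \<le> s" and sl: "s \<le> l"
  shows "\<exists>P. is_partition (HH l) l P \<and> (\<forall>i<s. is_stable (HH l) (P i)) \<and>
           (\<forall>i. s \<le> i \<and> i < l \<longrightarrow> is_clique (HH l) (P i))"
proof -
  consider "s = 1" | "2 \<le> s \<and> s \<le> l - 2" | "s = l - 1" | "s = l" using s1 sl by linarith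
  then show ?thesis
  proof cases
    case 1
    have "is_partition (HH l) l (PP l p1)" using part_HH[OF p1_range[OF l5]] .
    moreover have "\<forall>i<s. is_stable (HH l) (PP l p1 i)"
      using 1 stable_HH[OF p1_stable] by auto
    moreover have "\<forall>i. s \<le> i \<and> i < l \<longrightarrow> is_clique (HH l) (PP l p1 i)"
      using 1 clique_HH[OF p1_clique] by auto
    ultimately show ?thesis by blast
  next
    case 2
    then have r: "\<forall>u. inV l u \<longrightarrow> pm s u < l" using pm_range[of s l] l5 by auto
    have "is_partition (HH l) l (PP l (pm s))" using part_HH[OF r] .
    moreover have "\<forall>i<s. is_stable (HH l) (PP l (pm s) i)"
      using 2 stable_HH[OF pm_stable] by auto
    moreover have "\<forall>i. s \<le> i \<and> i < l \<longrightarrow> is_clique (HH l) (PP l (pm s) i)"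
      using 2 clique_HH[OF pm_clique] by auto
    ultimately show ?thesis by blast
  next
    case 3
    have "is_partition (HH l) l (PP l (pL1 l))" using part_HH[OF pL1_range[OF l5]] .
    moreover have "\<forall>i<s. is_stable (HH l) (PP l (pL1 l) i)"
      using 3 stable_HH[OF pL1_stable[OF l5]] by auto
    moreover have "\<forall>i. s \<le> i \<and> i < l \<longrightarrow> is_clique (HH l) (PP l (pL1 l) i)"
    proof (intro allI impI)
      fix i assume "s \<le> i \<and> i < l"
      then have "i = l - 1" using 3 by linarith
      then show "is_clique (HH l) (PP l (pL1 l) i)"
        using clique_HH[OF pL1_clique[OF l5]] by simp
    qed
    ultimately show ?thesis by blast
  next
    case 4
    have "is_partition (HH l) l (PP l (pL l))" using part_HH[OF pL_range[OF l5]] .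
    moreover have "\<forall>i<s. is_stable (HH l) (PP l (pL l) i)"
      using stable_HH[OF pL_stable[OF l5]] by auto
    moreover have "\<forall>i. s \<le> i \<and> i < l \<longrightarrow> is_clique (HH l) (PP l (pL l) i)"
      using 4 by auto
    ultimately show ?thesis by blast
  qed
qed



lemma sum_bound_lemma:
  fixes g :: "nat \<Rightarrow> nat"
  assumes sum: "(\<Sum>i<l. g i) = l + 1" and g0: "g 0 \<le> 2" and gi: "\<forall>i\<in>{1..<l}. g i \<le> 1" and l1: "1 \<le> l"
  shows "2 \<le> g 0 \<and> (\<forall>k\<in>{1..<l}. 1 \<le> g k)"
proof -
  have split: "(\<Sum>i<l. g i) = g 0 + (\<Sum>i\<in>{1..<l}. g i)"
    using l1 by (simp add: lessThan_atLeast0 sum.atLeast_Suc_lessThan)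
  have S: "(\<Sum>i\<in>{1..<l}. g i) \<le> l - 1"
    using sum_bounded_above[of "{1..<l}" g 1] gi by auto
  have "2 \<le> g 0" using split S sum l1 by linarith
  moreover have "\<forall>k\<in>{1..<l}. 1 \<le> g k"
  proof
    fix k assume k: "k \<in> {1..<l}"
    have r: "(\<Sum>i\<in>{1..<l}. g i) = g k + (\<Sum>i\<in>{1..<l} - {k}. g i)"
      using k by (simp add: sum.remove)
    have "(\<Sum>i\<in>{1..<l} - {k}. g i) \<le> card ({1..<l} - {k}) * 1"
      using sum_bounded_above[of "{1..<l} - {k}" g 1] gi by auto
    moreover have "card ({1..<l} - {k}) = l - 2" using k by auto
    moreover have "2 \<le> l" using k by auto
    ultimately show "1 \<le> g k" using split r sum g0 by linarith
  qed
  ultimately show ?thesis by blast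
qed

lemma costar_props:
  assumes "graph_iso (induced G Z) (complement (star m))"
  shows "\<exists>v0 \<in> Z \<inter> verts G. (\<forall>y \<in> Z \<inter> verts G. \<not> adj G v0 y) \<and>
           (\<forall>x \<in> Z \<inter> verts G. \<forall>y \<in> Z \<inter> verts G. x \<noteq> v0 \<longrightarrow> y \<noteq> v0 \<longrightarrow> x \<noteq> y \<longrightarrow> adj G x y)"
proof -
  have vc: "verts (complement (star m)) = {0..m}"
    by (simp add: complement_def star_def verts_def)
  have ac: "\<And>a b. adj (complement (star m)) a b = (a \<in> {0..m} \<and> b \<in> {0..m} \<and> a \<noteq> b \<and> a \<noteq> 0 \<and> b \<noteq> 0)"
    by (auto simp: complement_def star_def verts_def adj_def)
  obtain f where bij: "bij_betw f (Z \<inter> verts G) {0..m}"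
    and ad: "\<forall>x\<in>Z \<inter> verts G. \<forall>y\<in>Z \<inter> verts G. adj (induced G Z) x y \<longleftrightarrow> adj (complement (star m)) (f x) (f y)"
    using assms unfolding graph_iso_def vc by auto
  have "0 \<in> f ` (Z \<inter> verts G)" using bij by (auto simp: bij_betw_def)
  then obtain v0 where v0: "v0 \<in> Z \<inter> verts G" "f v0 = 0" by auto
  have inj: "inj_on f (Z \<inter> verts G)" using bij by (auto simp: bij_betw_def)
  have fr: "\<And>x. x \<in> Z \<inter> verts G \<Longrightarrow> f x \<in> {0..m}" using bij by (auto simp: bij_betw_def)
  show ?thesis
  proof (intro bexI[OF _ v0(1)] conjI ballI impI)
    fix y assume y: "y \<in> Z \<inter> verts G"
    show "\<not> adj G v0 y" using ad[rule_format, OF v0(1) y] v0 y ac by auto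
  next
    fix x y assume x: "x \<in> Z \<inter> verts G" and y: "y \<in> Z \<inter> verts G" and "x \<noteq> v0" "y \<noteq> v0" "x \<noteq> y"
    have "f x \<noteq> 0"
    proof
      assume "f x = 0" then have "f x = f v0" using v0 by simp
      then show False using inj_onD[OF inj _ x v0(1)] \<open>x \<noteq> v0\<close> by blast
    qed
    moreover have "f y \<noteq> 0"
    proof
      assume "f y = 0" then have "f y = f v0" using v0 by simp
      then show False using inj_onD[OF inj _ y v0(1)] \<open>y \<noteq> v0\<close> by blast
    qed
    moreover have "f x \<noteq> f y" using inj_onD[OF inj _ x y] \<open>x \<noteq> y\<close> by blast
    ultimately show "adj G x y" using ad[rule_format, OF x y] x y fr ac by auto
  qed
qed

lemma witness:
  assumes "j \<le> l" "mm \<le> l" "j \<noteq> mm"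
  shows "\<exists>u. inV l u \<and> E (T j) u \<and> (\<forall>i. E u (T i) \<longrightarrow> i = j \<or> i = mm)"
proof -
  consider "2 \<le> j" | "j = 0" "mm = 1" | "j = 0" "2 \<le> mm" | "j = 1" "mm = 0" | "j = 1" "2 \<le> mm"
    using assms by linarith
  then show ?thesis
  proof cases
    case 1 then show ?thesis using assms by (intro exI[of _ "X j"]) (auto simp: E_def)
  next
    case 2 then show ?thesis using assms by (intro exI[of _ W]) (auto simp: E_def)
  next
    case 3 then show ?thesis using assms by (intro exI[of _ "A mm"]) (auto simp: E_def)
  next
    case 4 then show ?thesis using assms by (intro exI[of _ W]) (auto simp: E_def)
  next
    case 5 then show ?thesis using assms by (intro exI[of _ "B mm"]) (auto simp: E_def)
  qed
qed

lemma E3_ok: assumes l5: "5 \<le> l"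
  shows "\<not> (\<exists>P. is_partition (HH l) l P \<and>
        (is_clique (HH l) (P 0) \<or> (\<exists>m. graph_iso (induced (HH l) (P 0)) (complement (star m)))) \<and>
        (\<forall>i. 1 \<le> i \<and> i < l \<longrightarrow> is_clique (HH l) (P i)))"
proof
  assume "\<exists>P. is_partition (HH l) l P \<and>
        (is_clique (HH l) (P 0) \<or> (\<exists>m. graph_iso (induced (HH l) (P 0)) (complement (star m)))) \<and>
        (\<forall>i. 1 \<le> i \<and> i < l \<longrightarrow> is_clique (HH l) (P i))"
  then obtain P where part: "is_partition (HH l) l P"
    and P0: "is_clique (HH l) (P 0) \<or> (\<exists>m. graph_iso (induced (HH l) (P 0)) (complement (star m)))"
    and cl: "\<forall>i. 1 \<le> i \<and> i < l \<longrightarrow> is_clique (HH l) (P i)" by blast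
  have Pcov: "(\<Union>i<l. P i) = verts (HH l)" and Pdisj: "\<forall>i<l. \<forall>j<l. i \<noteq> j \<longrightarrow> P i \<inter> P j = {}"
    using part unfolding is_partition_def by auto
  define TT where "TT = (\<lambda>i. to_nat (T i)) ` {..l}"
  have finTT: "finite TT" by (simp add: TT_def)
  have cardTT: "card TT = l + 1"
    unfolding TT_def by (subst card_image) (auto simp: inj_on_def)
  have TTV: "TT \<subseteq> verts (HH l)" by (auto simp: TT_def)
  have TTst: "\<forall>x\<in>TT. \<forall>y\<in>TT. \<not> adj (HH l) x y" by (auto simp: TT_def E_def)
  define g where "g i = card (P i \<inter> TT)" for i
  have "TT = (\<Union>i\<in>{..<l}. P i \<inter> TT)" using TTV Pcov by auto
  moreover have "card (\<Union>i\<in>{..<l}. P i \<inter> TT) = (\<Sum>i\<in>{..<l}. card (P i \<inter> TT))"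
  proof (rule card_UN_disjoint)
    show "\<forall>i\<in>{..<l}. \<forall>j\<in>{..<l}. i \<noteq> j \<longrightarrow> P i \<inter> TT \<inter> (P j \<inter> TT) = {}"
      using Pdisj by blast
  qed (auto simp: finTT)
  ultimately have "card TT = (\<Sum>i<l. g i)" unfolding g_def by simp
  then have sum: "(\<Sum>i<l. g i) = l + 1" using cardTT by simp
  have cl1: "card (K \<inter> TT) \<le> 1" if "is_clique (HH l) K" for K
  proof -
    have "finite (K \<inter> TT)" using finTT by simp
    moreover have "\<forall>a1\<in>K \<inter> TT. \<forall>a2\<in>K \<inter> TT. a1 = a2"
      using that TTst unfolding is_clique_def by blast
    ultimately show ?thesis using card_le_Suc0_iff_eq by auto
  qed
  have gi: "\<forall>i\<in>{1..<l}. g i \<le> 1" using cl cl1 by (auto simp: g_def)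
  show False
  proof (cases "is_clique (HH l) (P 0)")
    case True
    have "\<forall>i\<in>{..<l}. g i \<le> 1"
    proof
      fix i assume "i \<in> {..<l}"
      show "g i \<le> 1"
      proof (cases "i = 0")
        case True then show ?thesis using cl1 \<open>is_clique (HH l) (P 0)\<close> by (simp add: g_def)
      next
        case False then show ?thesis using gi \<open>i \<in> {..<l}\<close> by auto
      qed
    qed
    then have "(\<Sum>i<l. g i) \<le> card {..<l} * 1"
      using sum_bounded_above[of "{..<l}" g "1::nat"] by auto
    then show False using sum by simp
  next
    case False
    then obtain m where "graph_iso (induced (HH l) (P 0)) (complement (star m))" using P0 by blast
    from costar_props[OF this] obtain v0 where v0: "v0 \<in> P 0 \<inter> verts (HH l)"
      and iso0: "\<forall>y \<in> P 0 \<inter> verts (HH l). \<not> adj (HH l) v0 y"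
      and cq: "\<forall>x \<in> P 0 \<inter> verts (HH l). \<forall>y \<in> P 0 \<inter> verts (HH l). x \<noteq> v0 \<longrightarrow> y \<noteq> v0 \<longrightarrow> x \<noteq> y \<longrightarrow> adj (HH l) x y"
      by blast
    have P0V: "P 0 \<subseteq> verts (HH l)"
    proof -
      have "0 < l" using l5 by simp
      then have "P 0 \<subseteq> (\<Union>i<l. P i)" by blast
      then show ?thesis using Pcov by simp
    qed
    have c1: "card ((P 0 - {v0}) \<inter> TT) \<le> 1"
    proof -
      have "\<forall>a1\<in>(P 0 - {v0}) \<inter> TT. \<forall>a2\<in>(P 0 - {v0}) \<inter> TT. a1 = a2"
      proof (intro ballI)
        fix a1 a2 assume a1: "a1 \<in> (P 0 - {v0}) \<inter> TT" and a2: "a2 \<in> (P 0 - {v0}) \<inter> TT"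
        show "a1 = a2"
        proof (rule ccontr)
          assume "a1 \<noteq> a2"
          then have "adj (HH l) a1 a2" using cq a1 a2 P0V by auto
          then show False using TTst a1 a2 by auto
        qed
      qed
      then show ?thesis using card_le_Suc0_iff_eq[of "(P 0 - {v0}) \<inter> TT"] finTT by auto
    qed
    have "P 0 \<inter> TT \<subseteq> insert v0 ((P 0 - {v0}) \<inter> TT)" by auto
    then have "g 0 \<le> card (insert v0 ((P 0 - {v0}) \<inter> TT))"
      unfolding g_def using finTT by (intro card_mono) auto
    also have "\<dots> \<le> Suc (card ((P 0 - {v0}) \<inter> TT))" by (rule card_insert_le_m1) auto
    finally have g0: "g 0 \<le> 2" using c1 by linarith
    from sum_bound_lemma[OF sum g0 gi] l5
    have g02: "2 \<le> g 0" and gk: "\<forall>k\<in>{1..<l}. 1 \<le> g k" by auto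
    have v0TT: "v0 \<in> TT"
    proof (rule ccontr)
      assume "v0 \<notin> TT"
      then have "P 0 \<inter> TT \<subseteq> (P 0 - {v0}) \<inter> TT" by auto
      then have "g 0 \<le> card ((P 0 - {v0}) \<inter> TT)" unfolding g_def using finTT by (intro card_mono) auto
      then show False using c1 g02 by linarith
    qed
    obtain t where t: "t \<in> P 0 \<inter> TT" "t \<noteq> v0"
    proof (rule ccontr)
      assume "\<not> thesis"
      then have "\<forall>a1\<in>P 0 \<inter> TT. \<forall>a2\<in>P 0 \<inter> TT. a1 = a2" using that by blast
      then have "g 0 \<le> 1" unfolding g_def using card_le_Suc0_iff_eq[of "P 0 \<inter> TT"] finTT by auto
      then show False using g02 by linarith
    qed
    obtain j where j: "j \<le> l" "v0 = to_nat (T j)" using v0TT by (auto simp: TT_def)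
    obtain mm where mm: "mm \<le> l" "t = to_nat (T mm)" using t by (auto simp: TT_def)
    have "j \<noteq> mm" using j mm t by auto
    then obtain u where u: "inV l u" "E (T j) u" and uN: "\<forall>i. E u (T i) \<longrightarrow> i = j \<or> i = mm"
      using witness[OF j(1) mm(1)] by blast
    have "to_nat u \<in> verts (HH l)" using u by simp
    then have "to_nat u \<in> (\<Union>i<l. P i)" using Pcov by simp
    then obtain k where k: "k < l" "to_nat u \<in> P k" by blast
    show False
    proof (cases "k = 0")
      case True
      then have "\<not> adj (HH l) v0 (to_nat u)" using iso0 k P0V by auto
      then show False using u j by simp
    next
      case False
      then have "1 \<le> g k" using gk k by auto
      then have "P k \<inter> TT \<noteq> {}" unfolding g_def by (metis card.empty not_one_le_zero)
      then obtain i where i: "i \<le> l" "to_nat (T i) \<in> P k" by (auto simp: TT_def)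
      have "u \<noteq> T i" using u(2) by (auto simp: E_def)
      then have neq: "to_nat u \<noteq> to_nat (T i)" by simp
      have "is_clique (HH l) (P k)" using cl False k by auto
      then have "\<forall>x\<in>P k. \<forall>y\<in>P k. x \<noteq> y \<longrightarrow> adj (HH l) x y" by (simp add: is_clique_def)
      then have "adj (HH l) (to_nat u) (to_nat (T i))"
        using k(2) i(2) neq by blast
      then have "E u (T i)" by simp
      then have "i = j \<or> i = mm" using uN by blast
      then have "to_nat (T i) \<in> P 0" using j mm v0 t by auto
      then show False using Pdisj k i False l5 by blast
    qed
  qed
qed



lemma HH_EPS: "5 \<le> l \<Longrightarrow> l_EPS l (HH l)"
  unfolding l_EPS_def using EPS1_ok F1_ok F2_ok F3_ok F4_ok E3_ok by auto

lemma inV_mono: "l \<le> l' \<Longrightarrow> inV l u \<Longrightarrow> inV l' u"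
  by (cases u) auto

lemma card_HH_less: assumes "l < l'" shows "card (verts (HH l)) < card (verts (HH l'))"
proof (rule psubset_card_mono)
  show "finite (verts (HH l'))" by (simp add: verts_HH finite_inV)
  have "verts (HH l) \<subseteq> verts (HH l')"
  proof
    fix x assume "x \<in> verts (HH l)"
    then obtain u where "x = to_nat u" "inV l u" by (auto simp: verts_HH)
    then show "x \<in> verts (HH l')" using inV_mono[of l l' u] assms by simp
  qed
  moreover have "to_nat (T l') \<in> verts (HH l') - verts (HH l)" using assms by simp
  ultimately show "verts (HH l) \<subset> verts (HH l')" by blast
qed

lemma HH_inj: "inj_on HH {5..}"
proof (rule inj_onI)
  fix l l' assume "HH l = HH l'"
  then have "card (verts (HH l)) = card (verts (HH l'))" by simp
  then show "l = l'" using card_HH_less[of l l'] card_HH_less[of l' l] by (cases "l < l'"; cases "l' < l") auto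
qed

theorem theorem3p12:
  shows "\<exists>\<G> :: nat graph set. infinite \<G> \<and>
           (\<forall>G\<in>\<G>. wf_graph G \<and> EPS_graph G) \<and>
           (\<forall>G\<in>\<G>. \<forall>H\<in>\<G>. G \<noteq> H \<longrightarrow> \<not> graph_iso G H)"
proof (intro exI[of _ "HH ` {5..}"] conjI)
  show "infinite (HH ` {5..})"
    using HH_inj infinite_Ici[of "5::nat"] finite_imageD by blast
  show "\<forall>G\<in>HH ` {5..}. wf_graph G \<and> EPS_graph G"
    using wf_HH HH_EPS unfolding EPS_graph_def by auto
  show "\<forall>G\<in>HH ` {5..}. \<forall>H\<in>HH ` {5..}. G \<noteq> H \<longrightarrow> \<not> graph_iso G H"
  proof (intro ballI impI notI)
    fix G H assume G: "G \<in> HH ` {5..}" and H: "H \<in> HH ` {5..}" and ne: "G \<noteq> H" and iso: "graph_iso G H"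
    obtain l where l: "G = HH l" using G by auto
    obtain l' where l': "H = HH l'" using H by auto
    from iso obtain f where "bij_betw f (verts G) (verts H)" unfolding graph_iso_def by blast
    then have "card (verts (HH l)) = card (verts (HH l'))" using l l' bij_betw_same_card by blast
    moreover have "l \<noteq> l'" using ne l l' by auto
    ultimately show False using card_HH_less[of l l'] card_HH_less[of l' l] by (cases "l < l'") auto
  qed
qed

end
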